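(* Let $p,q,s,t$ be non-negative integers with $t\le s\le p+q$. Then \[ \binom{p+q+t}{s}\binom{s}{t}=\sum_{\substack{a+c=s,\ n+r=t\\ 0\le n\le a,\ 0\le r\le c}}\binom{p+n}{a}\binom{a}{n}\binom{q+r}{c}\binom{c}{r}\;-\;\sum_{\substack{a+c=s-1,\ n+r=t-1\\ 0\le n\le a,\ 0\le r\le c}}\binom{p+n}{a}\binom{a}{n}\binom{q+r}{c}\binom{c}{r}, \] where all summation indices are non-negative integers. *)

theory Defs
  imports Main
begin

text \<open>Summand of the identity, and the (finite) index set of quadruples (a,c,n,r)
  of natural numbers with a + c = S, n + r = T, n <= a, r <= c, where S, T are
  integers (so that S = s - 1, T = t - 1 may be negative, giving an empty sum).\<close>

definition idx :: "int \<Rightarrow> int \<Rightarrow> (nat \<times> nat \<times> nat \<times> nat) set" where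
  "idx S T = {(a, c, n, r). int a + int c = S \<and> int n + int r = T \<and> n \<le> a \<and> r \<le> c}"

definition term4 :: "nat \<Rightarrow> nat \<Rightarrow> nat \<times> nat \<times> nat \<times> nat \<Rightarrow> int" where
  "term4 p q x = (case x of (a, c, n, r) \<Rightarrow>
     int ((p + n) choose a) * int (a choose n) * int ((q + r) choose c) * int (c choose r))"

end

theory Submission
  imports Defs "HOL-Computational_Algebra.Formal_Power_Series"
begin

lemma neg_choose:
  "(of_nat ((p + n) choose n) :: real) = (-1)^n * ((- of_nat p - 1) gchoose n)"
proof -
  have "(of_nat ((p + n) choose n) :: real) = (of_nat (p+n)) gchoose n"
    by (rule binomial_gbinomial)
  also have "\<dots> = (-1)^n * ((of_nat n - of_nat (p+n) - 1) gchoose n)"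
    by (rule gbinomial_negated_upper)
  also have "of_nat n - of_nat (p+n) - 1 = (- of_nat p - 1 :: real)" by simp
  finally show ?thesis .
qed

lemma G_sum:
  "(\<Sum>n\<le>t. ((p+n) choose n) * ((q+(t-n)) choose (t-n))) = (p+q+1+t) choose t"
proof -
  have "(of_nat (\<Sum>n\<le>t. ((p+n) choose n) * ((q+(t-n)) choose (t-n))) :: real)
     = (\<Sum>n\<le>t. (-1)^t * (((- of_nat p - 1) gchoose n) * ((- of_nat q - 1) gchoose (t-n))))"
    unfolding of_nat_sum of_nat_mult
  proof (rule sum.cong[OF refl])
    fix n assume "n \<in> {..t}"
    then have "n + (t - n) = t" by simp
    then have "(-1::real)^t = (-1)^n * (-1)^(t-n)" by (metis power_add)
    then show "of_nat ((p+n) choose n) * of_nat ((q+(t-n)) choose (t-n))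
       = (-1::real)^t * (((- of_nat p - 1) gchoose n) * ((- of_nat q - 1) gchoose (t-n)))"
      by (simp add: neg_choose)
  qed
  also have "\<dots> = (-1)^t * ((- of_nat p - 1 + (- of_nat q - 1)) gchoose t)"
    by (simp add: sum_distrib_left[symmetric] atMost_atLeast0 gbinomial_Vandermonde)
  also have "(- of_nat p - 1 + (- of_nat q - 1) :: real) = - (of_nat (p+q+2))" by simp
  also have "(-1)^t * ((- (of_nat (p+q+2)::real)) gchoose t)
      = (-1)^t * ((-1) ^ t * ((of_nat (p+q+2) + of_nat t - 1) gchoose t))"
    by (subst gbinomial_minus) (rule refl)
  also have "\<dots> = ((-1)^t * (-1)^t) * ((of_nat (p+q+2) + of_nat t - 1) gchoose t)"
    by (rule mult.assoc[symmetric])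
  also have "((-1::real)^t * (-1)^t) = 1"
    by (metis power_mult_distrib mult_minus1 power_one minus_minus)
  also have "(of_nat (p+q+2) + of_nat t - 1 :: real) = of_nat (p+q+1+t)" by simp
  also have "1 * ((of_nat (p+q+1+t)) gchoose t) = (of_nat ((p+q+1+t) choose t) :: real)" by (simp add: binomial_gbinomial)
  finally show ?thesis by (metis of_nat_eq_iff)
qed

lemma cm: "((p+n) choose (n+m)) * ((n+m) choose n) = ((p+n) choose n) * (p choose m)"
proof (cases "m \<le> p")
  case True
  then show ?thesis using choose_mult[of n "n+m" "p+n"] by simp
next
  case False
  then show ?thesis by (simp add: binomial_eq_0)
qed

lemma main:
  fixes s t :: nat
  assumes "t \<le> s"
  shows "(\<Sum>x\<in>idx (int s) (int t). term4 p q x) = int (((p+q+1+t) choose t) * ((p+q) choose (s-t)))"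
proof -
  define f where "f = (\<lambda>(n::nat,m::nat). (n+m, (t-n)+(s-t-m), n, t-n))"
  have img: "idx (int s) (int t) = f ` ({..t} \<times> {..s-t})"
  proof
    show "idx (int s) (int t) \<subseteq> f ` ({..t} \<times> {..s-t})"
    proof
      fix x assume "x \<in> idx (int s) (int t)"
      then obtain a c n r where x: "x = (a,c,n,r)" "a + c = s" "n + r = t" "n \<le> a" "r \<le> c"
        unfolding idx_def by auto
      then have "x = f (n, a - n)" "(n, a-n) \<in> {..t} \<times> {..s-t}" unfolding f_def by auto
      then show "x \<in> f ` ({..t} \<times> {..s-t})" by blast
    qed
  next
    show "f ` ({..t} \<times> {..s-t}) \<subseteq> idx (int s) (int t)"
      using assms unfolding f_def idx_def by auto
  qed
  have inj: "inj_on f ({..t} \<times> {..s-t})"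
    unfolding f_def inj_on_def by auto
  have "(\<Sum>x\<in>idx (int s) (int t). term4 p q x) = (\<Sum>y\<in>{..t} \<times> {..s-t}. term4 p q (f y))"
    unfolding img by (rule sum.reindex[OF inj, unfolded comp_def])
  also have "\<dots> = (\<Sum>y\<in>{..t} \<times> {..s-t}. (\<lambda>n m. int (((p+n) choose n) * ((q+(t-n)) choose (t-n)))
        * int ((p choose m) * (q choose (s-t-m)))) (fst y) (snd y))"
  proof (rule sum.cong[OF refl])
    fix y assume "y \<in> {..t} \<times> {..s-t}"
    then obtain n m where y: "y = (n,m)" "n \<le> t" "m \<le> s - t" by auto
    have 1: "((p+n) choose (n+m)) * ((n+m) choose n) = ((p+n) choose n) * (p choose m)" by (rule cm)
    have 2: "((q+(t-n)) choose ((t-n)+(s-t-m))) * (((t-n)+(s-t-m)) choose (t-n))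
       = ((q+(t-n)) choose (t-n)) * (q choose (s-t-m))" by (rule cm)
    have "term4 p q (f y) = int (((p+n) choose (n+m)) * ((n+m) choose n)) *
       int (((q+(t-n)) choose ((t-n)+(s-t-m))) * (((t-n)+(s-t-m)) choose (t-n)))"
      unfolding y f_def term4_def by simp
    also have "\<dots> = int (((p+n) choose n) * (p choose m)) * int (((q+(t-n)) choose (t-n)) * (q choose (s-t-m)))"
      using 1 2 by simp
    finally show "term4 p q (f y) = (\<lambda>n m. int (((p+n) choose n) * ((q+(t-n)) choose (t-n)))
        * int ((p choose m) * (q choose (s-t-m)))) (fst y) (snd y)"
      using y by (simp add: algebra_simps)
  qed
  also have "\<dots> = (\<Sum>n\<le>t. int (((p+n) choose n) * ((q+(t-n)) choose (t-n))))
       * (\<Sum>m\<le>s-t. int ((p choose m) * (q choose (s-t-m))))"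
    unfolding sum_product sum.cartesian_product by (rule sum.cong) auto
  also have "\<dots> = int (((p+q+1+t) choose t) * ((p+q) choose (s-t)))"
    unfolding of_nat_sum[symmetric] G_sum vandermonde by simp
  finally show ?thesis .
qed

theorem proposition4p1:
  fixes p q s t :: nat
  assumes "t \<le> s" and "s \<le> p + q"
  shows "int ((p + q + t) choose s) * int (s choose t)
         = (\<Sum>x\<in>idx (int s) (int t). term4 p q x)
           - (\<Sum>x\<in>idx (int s - 1) (int t - 1). term4 p q x)"
proof -
  have cmu: "((p+q+t) choose s) * (s choose t) = ((p+q+t) choose t) * ((p+q+t-t) choose (s-t))"
    using choose_mult[of t s "p+q+t"] assms by linarith
  have lhs: "int ((p + q + t) choose s) * int (s choose t) = int ((p+q+t) choose t) * int ((p+q) choose (s-t))"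
    using cmu by (metis add_diff_cancel_right' of_nat_mult)
  show ?thesis
  proof (cases t)
    case 0
    have "idx (int s - 1) (int t - 1) = {}" unfolding idx_def 0 by auto
    then show ?thesis using main[OF assms(1), of p q] lhs 0 by simp
  next
    case (Suc t')
    with assms(1) obtain s' where s: "s = Suc s'" "t' \<le> s'" by (cases s) auto
    have e: "int s - 1 = int s'" "int t - 1 = int t'" using s Suc by auto
    have d: "s' - t' = s - t" using s Suc by simp
    have p: "(p+q+1+t) choose t = ((p+q+t) choose t) + ((p+q+1+t') choose t')"
      using Suc by simp
    have "(\<Sum>x\<in>idx (int s) (int t). term4 p q x) - (\<Sum>x\<in>idx (int s - 1) (int t - 1). term4 p q x)
       = int (((p+q+1+t) choose t) * ((p+q) choose (s-t))) - int (((p+q+1+t') choose t') * ((p+q) choose (s-t)))"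
      unfolding e main[OF assms(1)] main[OF s(2)] d ..
    also have "\<dots> = int ((p+q+t) choose t) * int ((p+q) choose (s-t))"
      unfolding p by (simp add: algebra_simps)
    finally show ?thesis using lhs by simp
  qed
qed

end
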